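(* There is a weight-halving bijection from $[\mathcal{P}3_{o}\times\mathcal{P}3]_{\mathsf{even}}$ to $\mathcal{P}3_{o}\times\mathcal{P}3_{o}\times\mathcal{P}3\times\mathcal{P}3$. As a consequence, the numbers $P_{1^{-2}2^{1}4^{2}8^{-1}}(n)$ defined by $\sum_{n\ge0}P_{1^{-2}2^{1}4^{2}8^{-1}}(n)q^n=\frac{f_2f_4^2}{f_1^2f_8}$ form a $2$-convolutive sequence, i.e. $\sum_{n\ge0}P_{1^{-2}2^{1}4^{2}8^{-1}}(2n)q^n=\big(\sum_{n\ge0}P_{1^{-2}2^{1}4^{2}8^{-1}}(n)q^n\big)^2$.
   Context: A partition is a non-increasing finite sequence of positive integers (parts); its weight is the sum of its parts. $\mathcal{P}3$ denotes the set of partitions in which each part size occurs at most $3$ times, and $\mathcal{P}3_{o}$ the set of such partitions all of whose parts are odd. The weight of a tuple of partitions is the sum of the weights of its components. For a set $\mathcal{U}$ of weighted objects, $[\mathcal{U}]_{\mathsf{even}}$ is the subset of members of even weight. A bijection is weight-halving if the weight of the image is half the weight of the object. $f_i:=(q^i;q^i)_\infty=\prod_{k\ge1}(1-q^{ik})$. A sequence $(a_n)_{n\ge0}$ is $m$-convolutive if $\sum_{n\ge0}a_{mn}q^n=\big(\sum_{n\ge0}a_nq^n\big)^m$. *)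

theory Defs
  imports "HOL-Computational_Algebra.Formal_Power_Series"
begin

definition is_partition :: "nat list \<Rightarrow> bool" where
  "is_partition xs \<longleftrightarrow> sorted_wrt (\<lambda>a b. a \<ge> b) xs \<and> (\<forall>x\<in>set xs. 0 < x)"

definition weight :: "nat list \<Rightarrow> nat" where
  "weight xs = sum_list xs"

definition P3 :: "nat list set" where
  "P3 = {xs. is_partition xs \<and> (\<forall>k. count_list xs k \<le> 3)}"

definition P3o :: "nat list set" where
  "P3o = {xs. xs \<in> P3 \<and> (\<forall>x\<in>set xs. odd x)}"

text \<open>f_i = prod_{k>=1} (1 - q^(i k)) as a formal power series; its n-th coefficient
  agrees with that of the finite product over k = 1..n.\<close>
definition f_eta :: "nat \<Rightarrow> rat fps" where
  "f_eta i = Abs_fps (\<lambda>n. fps_nth (\<Prod>k\<in>{1..n}. (1 - fps_X ^ (i * k))) n)"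

definition GF :: "rat fps" where
  "GF = f_eta 2 * f_eta 4 ^ 2 / (f_eta 1 ^ 2 * f_eta 8)"

definition Pcoef :: "nat \<Rightarrow> rat" where
  "Pcoef n = fps_nth GF n"

end

theory Submission
  imports Defs "HOL-Computational_Algebra.Polynomial"
begin


definition eqN :: "nat \<Rightarrow> 'a::comm_ring_1 fps \<Rightarrow> 'a fps \<Rightarrow> bool" where
  "eqN N F G \<longleftrightarrow> (\<forall>n\<le>N. fps_nth F n = fps_nth G n)"

lemma eqN_refl[simp]: "eqN N F F" by (simp add: eqN_def)
lemma eqN_sym: "eqN N F G \<Longrightarrow> eqN N G F" by (simp add: eqN_def)
lemma eqN_trans[trans]: "eqN N F G \<Longrightarrow> eqN N G H \<Longrightarrow> eqN N F H" by (simp add: eqN_def)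
lemma eqN_mono: "eqN N F G \<Longrightarrow> M \<le> N \<Longrightarrow> eqN M F G" by (simp add: eqN_def)
lemma eqN_eq: "(\<And>N. eqN N F G) \<Longrightarrow> F = G"
  unfolding eqN_def by (metis fps_ext order_refl)
lemma eqN_add: "eqN N F G \<Longrightarrow> eqN N F' G' \<Longrightarrow> eqN N (F + F') (G + G')"
  by (simp add: eqN_def)
lemma eqN_diff: "eqN N F G \<Longrightarrow> eqN N F' G' \<Longrightarrow> eqN N (F - F') (G - G')"
  by (simp add: eqN_def)
lemma eqN_mult: "eqN N F G \<Longrightarrow> eqN N F' G' \<Longrightarrow> eqN N (F * F') (G * G')"
  unfolding eqN_def fps_mult_nth by (auto intro!: sum.cong)
lemma eqN_power: "eqN N F G \<Longrightarrow> eqN N (F ^ k) (G ^ k)"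
  by (induction k) (auto intro: eqN_mult)
lemma eqN_prod: "(\<And>i. i \<in> A \<Longrightarrow> eqN N (F i) (G i)) \<Longrightarrow> eqN N (prod F A) (prod G A)"
  by (induction A rule: infinite_finite_induct) (auto intro: eqN_mult)
lemma eqN_sum: "(\<And>i. i \<in> A \<Longrightarrow> eqN N (F i) (G i)) \<Longrightarrow> eqN N (sum F A) (sum G A)"
  by (induction A rule: infinite_finite_induct) (auto intro: eqN_add)
lemma eqN_inverse:
  fixes F G :: "'a::field fps"
  assumes "eqN N F G" "fps_nth F 0 \<noteq> 0"
  shows "eqN N (inverse F) (inverse G)"
proof -
  have G0: "fps_nth G 0 \<noteq> 0" using assms by (auto simp: eqN_def)
  have "eqN N (inverse G * (F * inverse F)) (inverse G * (G * inverse F))"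
    by (intro eqN_mult assms eqN_refl)
  moreover have "inverse G * (F * inverse F) = inverse G" using assms(2) by (simp add: inverse_mult_eq_1')
  moreover have "inverse G * (G * inverse F) = inverse F"
    by (simp add: mult.assoc[symmetric] inverse_mult_eq_1 G0)
  ultimately show ?thesis by (metis eqN_sym)
qed
lemma eqN_Xpow_zero: "N < K \<Longrightarrow> eqN N (fps_X ^ K * F) 0"
  by (simp add: eqN_def fps_X_power_mult_nth)
lemma eqN_Xpow_zero': "N < K \<Longrightarrow> eqN N (fps_X ^ K) 0"
  using eqN_Xpow_zero[of N K 1] by simp
lemma eqN_one_minus: "N < K \<Longrightarrow> eqN N (1 - fps_X ^ K) 1"
  by (simp add: eqN_def)
lemma eqN_one_plus: "N < K \<Longrightarrow> eqN N (1 + fps_X ^ K) 1"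
  by (simp add: eqN_def)

lemma eqN_prod_stable:
  assumes "\<And>k. k \<ge> N \<Longrightarrow> eqN N (g k) 1" "M \<ge> N"
  shows "eqN N (\<Prod>k<M. g k) (\<Prod>k<N. g k)"
  using assms(2)
proof (induction M)
  case 0 then show ?case by simp
next
  case (Suc M)
  show ?case
  proof (cases "Suc M = N")
    case True then show ?thesis by simp
  next
    case False
    then have "M \<ge> N" using Suc by simp
    then have "eqN N ((\<Prod>k<M. g k) * g M) ((\<Prod>k<N. g k) * 1)"
      using Suc assms(1) by (intro eqN_mult) auto
    then show ?thesis by simp
  qed
qed

lemma eqN_prod_stable2:
  assumes "\<And>k. k \<ge> N \<Longrightarrow> eqN N (g k) 1" "M \<ge> N" "M' \<ge> N"
  shows "eqN N (\<Prod>k<M. g k) (\<Prod>k<M'. g k)"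
proof -
  have "eqN N (\<Prod>k<M. g k) (\<Prod>k<N. g k)" by (rule eqN_prod_stable) (use assms in auto)
  moreover have "eqN N (\<Prod>k<M'. g k) (\<Prod>k<N. g k)" by (rule eqN_prod_stable) (use assms in auto)
  ultimately show ?thesis by (blast intro: eqN_sym eqN_trans)
qed

definition Pe :: "nat \<Rightarrow> nat \<Rightarrow> rat fps" where
  "Pe i M = (\<Prod>k<M. (1 - fps_X ^ (i * Suc k)))"

lemma Pe_stable: "i \<ge> 1 \<Longrightarrow> M \<ge> N \<Longrightarrow> M' \<ge> N \<Longrightarrow> eqN N (Pe i M) (Pe i M')"
  unfolding Pe_def
proof (rule eqN_prod_stable2)
  fix k assume "i \<ge> 1" "k \<ge> N"
  moreover have "Suc k \<le> i * Suc k" using mult_le_mono1[of 1 i "Suc k"] \<open>i \<ge> 1\<close> by simp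
  ultimately have "N < i * Suc k" by linarith
  then show "eqN N (1 - fps_X ^ (i * Suc k)) 1" by (rule eqN_one_minus)
qed

lemma f_eta_Pe: "f_eta i = Abs_fps (\<lambda>n. fps_nth (Pe i n) n)"
proof -
  have "(\<Prod>k\<in>{1..n}. (1 - fps_X ^ (i * k) :: rat fps)) = Pe i n" for n
  proof -
    have "{1..n} = {Suc 0..<Suc n}" by auto
    then show ?thesis unfolding Pe_def
      by (simp only: prod.shift_bounds_Suc_ivl atLeast0LessThan)
  qed
  then show ?thesis unfolding f_eta_def by simp
qed

lemma f_eta_eqN: "i \<ge> 1 \<Longrightarrow> M \<ge> N \<Longrightarrow> eqN N (f_eta i) (Pe i M)"
  unfolding eqN_def
proof (intro allI impI)
  fix n assume "i \<ge> 1" "M \<ge> N" "n \<le> N"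
  then have "eqN n (Pe i n) (Pe i M)" by (intro Pe_stable) auto
  then show "fps_nth (f_eta i) n = fps_nth (Pe i M) n" by (simp add: f_eta_Pe eqN_def)
qed

lemma f_eta_0: "fps_nth (f_eta i) 0 = 1"
  by (simp add: f_eta_Pe Pe_def)


abbreviation X :: "rat fps" where "X \<equiv> fps_X"

definition fac :: "nat \<Rightarrow> rat fps poly" where
  "fac k = [:X ^ (2*k+1), 1 + X ^ (4*k+2), X ^ (2*k+1):]"

definition U :: "nat \<Rightarrow> rat fps poly" where
  "U n = (\<Prod>k<n. fac k)"

lemma coeff_mult3_0: "coeff (p * [:a,b,c:]) 0 = a * coeff p 0"
  by (simp add: mult_pCons_right)
lemma coeff_mult3_1: "coeff (p * [:a,b,c:]) 1 = a * coeff p 1 + b * coeff p 0"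
  by (simp add: mult_pCons_right coeff_pCons)
lemma coeff_mult3_SS: "coeff (p * [:a,b,c:]) (Suc (Suc i)) = a * coeff p (Suc (Suc i)) + b * coeff p (Suc i) + c * coeff p i"
  by (simp add: mult_pCons_right coeff_pCons add.assoc)

lemma coeff_mult2_S: "coeff (p * [:a,b:]) (Suc i) = a * coeff p (Suc i) + b * coeff p i"
  by (simp add: mult_pCons_right coeff_pCons)

lemma U_Suc: "U (Suc n) = U n * fac n"
  by (simp add: U_def)

lemma U_coeff_high: "i > 2*n \<Longrightarrow> coeff (U n) i = 0"
proof (induction n arbitrary: i)
  case 0 then show ?case by (simp add: U_def coeff_1)
next
  case (Suc n)
  then obtain j where j: "i = Suc (Suc j)" "j > 2*n" by (metis Suc_lessE mult_Suc_right add_2_eq_Suc)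
  then show ?case using Suc by (simp add: U_Suc fac_def coeff_mult3_SS)
qed

lemma U_coeff_top: "coeff (U n) (2*n) = X ^ (n^2)"
proof (induction n)
  case 0 then show ?case by (simp add: U_def pcompose_1)
next
  case (Suc n)
  have "coeff (U (Suc n)) (Suc (Suc (2*n))) = X ^ (2*n+1) * coeff (U n) (2*n)"
    by (simp add: U_Suc fac_def coeff_mult3_SS U_coeff_high)
  also have "\<dots> = X ^ ((Suc n)^2)" using Suc by (simp add: power_add[symmetric] power2_eq_square algebra_simps)
  finally show ?case by simp
qed

lemma U_degree: "degree (U n) \<le> 2*n"
  by (rule degree_le) (simp add: U_coeff_high)

lemma poly_U_sum: "poly (U n) x = (\<Sum>i\<le>2*n. coeff (U n) i * x ^ i)"
proof -
  have "poly (U n) x = (\<Sum>i\<le>degree (U n). coeff (U n) i * x ^ i)" by (rule poly_altdef)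
  also have "\<dots> = (\<Sum>i\<le>2*n. coeff (U n) i * x ^ i)"
    by (rule sum.mono_neutral_left) (auto simp: U_degree coeff_eq_0)
  finally show ?thesis .
qed

definition Dodd :: "nat \<Rightarrow> rat fps" where
  "Dodd n = (\<Prod>k<n. (1 + X ^ (2*k+1)))"

lemma poly_U_1: "poly (U n) 1 = Dodd n ^ 2"
proof -
  have "poly (fac k) 1 = (1 + X ^ (2*k+1))^2" for k
    by (simp add: fac_def power2_eq_square algebra_simps power_add[symmetric])
  then show ?thesis by (simp add: U_def Dodd_def poly_prod power_mult_distrib prod_power_distrib)
qed

lemma fac_pcomp: "pcompose (fac n) [:0, X^2:] = smult X ([:X^(2*n), X:] * [:1, X^(2*n+3):])"
  apply (simp add: fac_def pcompose_pCons algebra_simps power_add[symmetric] mult_pCons_right smult_add_right)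
  apply (simp add: power_add power2_eq_square power_Suc power3_eq_cube)
  done


lemma fac_split: "fac n = [:1, X^(2*n+1):] * [:X^(2*n+1), 1:]"
  by (simp add: fac_def mult_pCons_right algebra_simps power_add[symmetric] power2_eq_square
      flip: power_Suc mult_2 mult_2_right)

lemma U_funeq:
  "smult X (pcompose (U n) [:0, X^2:]) * [:X^(2*n), X:] = smult (X^(2*n+1)) ([:1, X^(2*n+1):] * U n)"
proof (induction n)
  case 0 then show ?case by (simp add: U_def pcompose_1)
next
  case (Suc n)
  define Pc where "Pc = pcompose (U n) [:0, X^2:]"
  define A where "A = [:X^(2*n), X:]"
  define B where "B = [:1, X^(2*n+3):]"
  define a where "a = X^(2*n+1)"
  define C where "C = [:a, 1:]"
  define D where "D = [:1, a:]"
  have C2: "[:X^(2*Suc n), X:] = smult X C"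
    by (simp add: a_def C_def)
  have B': "[:1, X^(2*Suc n+1):] = B"
  proof -
    have "2*Suc n+1 = 2*n+3" by simp
    then show ?thesis by (simp only: B_def)
  qed
  have "smult X (pcompose (U (Suc n)) [:0, X^2:]) * [:X^(2*Suc n), X:]
      = smult X (Pc * smult X (A * B)) * [:X^(2*Suc n), X:]"
    by (simp only: U_Suc pcompose_mult fac_pcomp Pc_def A_def B_def)
  also have "\<dots> = smult X (Pc * smult X (A * B)) * smult X C"
    by (simp only: C2)
  also have "\<dots> = smult X (smult X (smult X Pc * A)) * (B * C)"
    by (simp add: mult_ac)
  also have "smult X Pc * A = smult (X^(2*n+1)) (D * U n)"
    using Suc by (simp add: Pc_def A_def a_def D_def)
  also have "smult X (smult X (smult (X^(2*n+1)) (D * U n))) * (B * C)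
      = smult (X^(2*Suc n+1)) (B * (U n * (D * C)))"
  proof -
    have x3: "X * (X * (X * X ^ (2 * n))) = X ^ (2 * n + 3)"
      by (simp only: power_add power3_eq_cube mult_ac)
    have "2*Suc n+1 = 2*n+3" by simp
    then show ?thesis by (simp add: mult_ac x3)
  qed
  also have "D * C = fac n" by (simp add: fac_split a_def C_def D_def)
  finally show ?case by (simp only: U_Suc B')
qed


definition u :: "nat \<Rightarrow> nat \<Rightarrow> rat fps" where "u n i = coeff (U n) i"

lemma U_rel0:
  "X * (X^(2*n) * (X^2)^(Suc i) * u n (Suc i) + X * (X^2)^i * u n i)
     = X^(2*n+1) * (u n (Suc i) + X^(2*n+1) * u n i)"
proof -
  have "coeff (smult X (pcompose (U n) [:0, X^2:]) * [:X^(2*n), X:]) (Suc i)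
      = coeff (smult (X^(2*n+1)) ([:1, X^(2*n+1):] * U n)) (Suc i)"
    by (simp only: U_funeq)
  then show ?thesis
    by (simp add: coeff_mult2_S coeff_pcompose_linear u_def mult_pCons_left coeff_pCons mult_ac del: power_Suc)
qed

lemma Xpow_cancel: "X^k * A = X^k * B \<Longrightarrow> A = B"
  by simp


lemma U_up:
  assumes "m < n"
  shows "(1 - X^(2*n+2*Suc m)) * u n (n + Suc m) = X^(2*m+1) * (1 - X^(2*(n - m))) * u n (n + m)"
proof -
  define r where "r = n - m - 1"
  have n: "n = m + r + 1" using assms by (simp add: r_def)
  define P where "P = X^m"
  define R where "R = X^r"
  define a where "a = u n (Suc (n+m))"
  define b where "b = u n (n+m)"
  have h: "X * (X^(2*n) * (X^2)^(Suc (n+m)) * a + X * (X^2)^(n+m) * b)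
     = X^(2*n+1) * (a + X^(2*n+1) * b)" unfolding a_def b_def by (rule U_rel0)
  have e1: "X^(2*n) = X^2*P^2*R^2"
  proof -
    have "2*n = 2 + m*2 + r*2" by (simp add: n)
    then show ?thesis by (simp only: power_add power_mult P_def R_def)
  qed
  have e2: "(X^2)^(Suc (n+m)) = X^4*P^4*R^2"
  proof -
    have "2*Suc (n+m) = 4 + m*4 + r*2" by (simp add: n)
    then have A: "X^(2*Suc (n+m)) = X^4*P^4*R^2" by (simp only: power_add power_mult P_def R_def)
    have B: "(X^2)^(Suc (n+m)) = X^(2*Suc (n+m))" by (simp only: power_mult)
    show ?thesis using B A by (rule trans)
  qed
  have e3: "(X^2)^(n+m) = X^2*P^4*R^2"
  proof -
    have "2*(n+m) = 2 + m*4 + r*2" by (simp add: n)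
    then have A: "X^(2*(n+m)) = X^2*P^4*R^2" by (simp only: power_add power_mult P_def R_def)
    have B: "(X^2)^(n+m) = X^(2*(n+m))" by (simp only: power_mult)
    show ?thesis using B A by (rule trans)
  qed
  have e4: "X^(2*n+1) = X^3*P^2*R^2"
  proof -
    have "2*n+1 = 3 + m*2 + r*2" by (simp add: n)
    then show ?thesis by (simp only: power_add power_mult P_def R_def)
  qed
  have e5: "X^(2*n+2*Suc m) = X^4*P^4*R^2"
  proof -
    have "2*n+2*Suc m = 4 + m*4 + r*2" by (simp add: n)
    then show ?thesis by (simp only: power_add power_mult P_def R_def)
  qed
  have e6: "X^(2*m+1) = X*P^2"
  proof -
    have "2*m+1 = 1 + m*2" by simp
    then show ?thesis by (simp only: power_add power_mult P_def power_one_right)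
  qed
  have e7: "X^(2*(n-m)) = X^2*R^2"
  proof -
    have "2*(n-m) = 2 + r*2" by (simp add: n)
    then show ?thesis by (simp only: power_add power_mult R_def)
  qed
  have h': "X * (X^2*P^2*R^2 * (X^4*P^4*R^2) * a + X * (X^2*P^4*R^2) * b)
     = X^3*P^2*R^2 * (a + X^3*P^2*R^2 * b)" using h by (simp only: e1 e2 e3 e4)
  have "X^3*P^2*R^2 * ((1 - X^4*P^4*R^2) * a) = X^3*P^2*R^2 * (X*P^2 * (1 - X^2*R^2) * b)"
    using h' by algebra
  then have "X^(2*n+1) * ((1 - X^(2*n+2*Suc m)) * a) = X^(2*n+1) * (X^(2*m+1) * (1 - X^(2*(n - m))) * b)"
    by (simp only: e4 e5 e6 e7)
  then show ?thesis unfolding a_def b_def by (simp only: Xpow_cancel add_Suc_right)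
qed


lemma U_down:
  assumes "m < n"
  shows "(1 - X^(2*n+2*Suc m)) * u n (n - Suc m) = X^(2*m+1) * (1 - X^(2*(n - m))) * u n (n - m)"
proof -
  define r where "r = n - m - 1"
  have n: "n = m + r + 1" using assms by (simp add: r_def)
  have i1: "n - Suc m = r" "n - m = Suc r" using n by simp_all
  define P where "P = X^m"
  define R where "R = X^r"
  define a where "a = u n (Suc r)"
  define b where "b = u n r"
  have h: "X * (X^(2*n) * (X^2)^(Suc r) * a + X * (X^2)^r * b)
     = X^(2*n+1) * (a + X^(2*n+1) * b)" unfolding a_def b_def by (rule U_rel0)
  have e1: "X^(2*n) = X^2*P^2*R^2"
  proof -
    have "2*n = 2 + m*2 + r*2" by (simp add: n)
    then show ?thesis by (simp only: power_add power_mult P_def R_def)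
  qed
  have e2: "(X^2)^(Suc r) = X^2*R^2"
  proof -
    have "2*Suc r = 2 + r*2" by simp
    then have A: "X^(2*Suc r) = X^2*R^2" by (simp only: power_add power_mult R_def)
    have B: "(X^2)^(Suc r) = X^(2*Suc r)" by (simp only: power_mult)
    show ?thesis using B A by (rule trans)
  qed
  have e3: "(X^2)^r = R^2"
    by (simp only: R_def flip: power_mult) (simp add: mult.commute)
  have e4: "X^(2*n+1) = X^3*P^2*R^2"
  proof -
    have "2*n+1 = 3 + m*2 + r*2" by (simp add: n)
    then show ?thesis by (simp only: power_add power_mult P_def R_def)
  qed
  have e5: "X^(2*n+2*Suc m) = X^4*P^4*R^2"
  proof -
    have "2*n+2*Suc m = 4 + m*4 + r*2" by (simp add: n)
    then show ?thesis by (simp only: power_add power_mult P_def R_def)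
  qed
  have e6: "X^(2*m+1) = X*P^2"
  proof -
    have "2*m+1 = 1 + m*2" by simp
    then show ?thesis by (simp only: power_add power_mult P_def power_one_right)
  qed
  have e7: "X^(2*(n-m)) = X^2*R^2"
  proof -
    have "2*(n-m) = 2 + r*2" by (simp add: n)
    then show ?thesis by (simp only: power_add power_mult R_def)
  qed
  have e8: "X^(2*r+2) = X^2*R^2"
  proof -
    have "2*r+2 = 2 + r*2" by simp
    then show ?thesis by (simp only: power_add power_mult R_def)
  qed
  have h': "X * (X^2*P^2*R^2 * (X^2*R^2) * a + X * R^2 * b)
     = X^3*P^2*R^2 * (a + X^3*P^2*R^2 * b)" using h by (simp only: e1 e2 e3 e4)
  have "X^2*R^2 * ((1 - X^4*P^4*R^2) * b) = X^2*R^2 * (X*P^2 * (1 - X^2*R^2) * a)"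
    using h' by algebra
  then have "X^(2*r+2) * ((1 - X^(2*n+2*Suc m)) * b) = X^(2*r+2) * (X^(2*m+1) * (1 - X^(2*(n - m))) * a)"
    by (simp only: e5 e6 e7 e8)
  then show ?thesis unfolding a_def b_def i1 by (rule Xpow_cancel)
qed


lemma telescope:
  fixes A B v :: "nat \<Rightarrow> rat fps"
  assumes "\<And>j. j < d \<Longrightarrow> A j * v (Suc j) = X^(2*j+1) * B j * v j"
  shows "(\<Prod>j<d. A j) * v d = X^(d^2) * (\<Prod>j<d. B j) * v 0"
  using assms
proof (induction d)
  case 0 then show ?case by simp
next
  case (Suc d)
  have "(\<Prod>j<Suc d. A j) * v (Suc d) = (\<Prod>j<d. A j) * (A d * v (Suc d))"
    by (simp add: mult_ac)
  also have "A d * v (Suc d) = X^(2*d+1) * B d * v d" using Suc.prems by simp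
  also have "(\<Prod>j<d. A j) * (X^(2*d+1) * B d * v d) = X^(2*d+1) * B d * ((\<Prod>j<d. A j) * v d)"
    by (simp add: mult_ac)
  also have "(\<Prod>j<d. A j) * v d = X^(d^2) * (\<Prod>j<d. B j) * v 0" using Suc by simp
  also have "X^(2*d+1) * B d * (X^(d^2) * (\<Prod>j<d. B j) * v 0) = X^(2*d+1+d^2) * (\<Prod>j<Suc d. B j) * v 0"
    by (simp add: power_add mult_ac)
  also have "2*d+1+d^2 = (Suc d)^2" by (simp add: power2_eq_square)
  finally show ?case .
qed

definition Aj :: "nat \<Rightarrow> nat \<Rightarrow> rat fps" where "Aj n j = 1 - X^(2*n+2*Suc j)"
definition Bj :: "nat \<Rightarrow> nat \<Rightarrow> rat fps" where "Bj n j = 1 - X^(2*(n-j))"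

lemma tele_up: "d \<le> n \<Longrightarrow> (\<Prod>j<d. Aj n j) * u n (n+d) = X^(d^2) * (\<Prod>j<d. Bj n j) * u n n"
  using telescope[of d "Aj n" "\<lambda>j. u n (n+j)" "Bj n"] U_up[of _ n]
  by (simp add: Aj_def Bj_def mult_ac)

lemma tele_down: "d \<le> n \<Longrightarrow> (\<Prod>j<d. Aj n j) * u n (n-d) = X^(d^2) * (\<Prod>j<d. Bj n j) * u n n"
  using telescope[of d "Aj n" "\<lambda>j. u n (n-j)" "Bj n"] U_down[of _ n]
  by (simp add: Aj_def Bj_def mult_ac)

lemma u_top: "u n (n+n) = X^(n^2)"
  using U_coeff_top[of n] by (simp add: u_def mult_2)

lemma Bj_prod: "(\<Prod>j<n. Bj n j) = Pe 2 n"
proof -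
  have "(\<Prod>j<n. Bj n j) = (\<Prod>j<n. (\<lambda>k. 1 - X^(2 * Suc k)) (n - Suc j))"
    by (intro prod.cong) (auto simp: Bj_def Suc_diff_Suc)
  also have "\<dots> = (\<Prod>k<n. 1 - X^(2 * Suc k))" by (rule prod.nat_diff_reindex)
  finally show ?thesis by (simp add: Pe_def)
qed

lemma c0_exact: "(\<Prod>j<n. Aj n j) = Pe 2 n * u n n"
proof -
  have "(\<Prod>j<n. Aj n j) * X^(n^2) = X^(n^2) * (Pe 2 n * u n n)"
    using tele_up[of n n] by (simp add: u_top Bj_prod mult_ac)
  then show ?thesis by (simp add: mult.commute)
qed

lemma prod_Aj_eqN: "N < 2*n+2 \<Longrightarrow> eqN N (\<Prod>j<d. Aj n j) 1"
proof -
  assume a: "N < 2*n+2"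
  have e: "eqN N (Aj n j) 1" for j unfolding Aj_def by (rule eqN_one_minus) (use a in simp)
  have "eqN N (\<Prod>j<d. Aj n j) (\<Prod>j<d. 1)"
    by (intro eqN_prod e)
  then show ?thesis by simp
qed

lemma c0_eqN: "N < 2*n+2 \<Longrightarrow> eqN N (Pe 2 n * u n n) 1"
  using prod_Aj_eqN[of N n n] by (simp add: c0_exact)

lemma prod_Aj_0: "fps_nth (\<Prod>j<d. Aj n j) 0 = 1"
  using prod_Aj_eqN[of 0 n d] by (simp add: eqN_def)

lemma est_gen:
  assumes tele: "(\<Prod>j<d. Aj n j) * v = X^(d^2) * (\<Prod>j<d. Bj n j) * w"
    and n: "2*N \<le> n" and d: "d \<le> n"
  shows "eqN N v (X^(d^2) * w)"
proof (cases "N < d^2")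
  case True
  let ?A = "\<Prod>j<d. Aj n j"
  have "v = inverse ?A * (?A * v)"
    using prod_Aj_0[of n d] by (simp add: mult.assoc[symmetric] inverse_mult_eq_1)
  also have "\<dots> = X^(d^2) * (inverse ?A * (\<Prod>j<d. Bj n j) * w)"
    unfolding tele by (simp only: mult_ac)
  finally have "eqN N v 0" using eqN_Xpow_zero[OF True] by simp
  moreover have "eqN N (X^(d^2) * w) 0" by (rule eqN_Xpow_zero[OF True])
  ultimately show ?thesis by (blast intro: eqN_sym eqN_trans)
next
  case False
  then have dN: "d \<le> N"
    by (metis le_trans not_less power2_nat_le_imp_le order_refl le_square power2_eq_square)
  have eA: "eqN N (\<Prod>j<d. Aj n j) 1" by (rule prod_Aj_eqN) (use n in simp)
  have eB1: "eqN N (Bj n j) 1" if "j < d" for j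
    unfolding Bj_def by (rule eqN_one_minus) (use n dN that in simp)
  have "eqN N (\<Prod>j<d. Bj n j) (\<Prod>j<d. 1)" by (intro eqN_prod eB1) simp
  then have eB: "eqN N (\<Prod>j<d. Bj n j) 1" by simp
  have "eqN N (1 * v) ((\<Prod>j<d. Aj n j) * v)" by (intro eqN_mult eqN_sym[OF eA] eqN_refl)
  also have "(\<Prod>j<d. Aj n j) * v = X^(d^2) * ((\<Prod>j<d. Bj n j) * w)" unfolding tele by (simp only: mult_ac)
  also have "eqN N \<dots> (X^(d^2) * (1 * w))" by (intro eqN_mult eqN_refl eB)
  finally show ?thesis by simp
qed

lemma est_up: "2*N \<le> n \<Longrightarrow> d \<le> n \<Longrightarrow> eqN N (u n (n+d)) (X^(d^2) * u n n)"
  by (rule est_gen[OF tele_up])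

lemma est_down: "2*N \<le> n \<Longrightarrow> d \<le> n \<Longrightarrow> eqN N (u n (n-d)) (X^(d^2) * u n n)"
  by (rule est_gen[OF tele_down])


lemma sum_lessThan_add: "(\<Sum>i<a+b. f i) = (\<Sum>i<a. f i) + (\<Sum>i<b. f (a+i))"
  for f :: "nat \<Rightarrow> 'a::comm_monoid_add"
  by (induction b) (simp_all add: add.assoc)

lemma sum_split: "(\<Sum>i\<le>2*n. f i) = f n + (\<Sum>j<n. f (n + Suc j) + f (n - Suc j))"
  for f :: "nat \<Rightarrow> 'a::comm_monoid_add"
proof -
  have "(\<Sum>i\<le>2*n. f i) = (\<Sum>i<n + Suc n. f i)"
    by (simp add: lessThan_Suc_atMost[symmetric] mult_2)
  also have "\<dots> = (\<Sum>i<n. f i) + (\<Sum>i<Suc n. f (n+i))" by (rule sum_lessThan_add)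
  also have "(\<Sum>i<n. f i) = (\<Sum>i<n. f (n - Suc i))" by (rule sum.nat_diff_reindex[symmetric])
  also have "(\<Sum>i<Suc n. f (n+i)) = f n + (\<Sum>i<n. f (n + Suc i))" by (subst sum.lessThan_Suc_shift) simp
  finally show ?thesis by (simp add: sum.distrib add_ac)
qed

definition phin :: "nat \<Rightarrow> rat fps" where
  "phin n = 1 + (\<Sum>j<n. X^((Suc j)^2) + X^((Suc j)^2))"

lemma Dodd_eqN:
  assumes "2*N \<le> n"
  shows "eqN N (Dodd n ^ 2) (u n n * phin n)"
proof -
  have "Dodd n ^ 2 = (\<Sum>i\<le>2*n. u n i)"
    using poly_U_sum[of n 1] by (simp add: poly_U_1 u_def)
  also have "\<dots> = u n n + (\<Sum>j<n. u n (n + Suc j) + u n (n - Suc j))" by (rule sum_split)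
  also have "eqN N \<dots> (u n n + (\<Sum>j<n. X^((Suc j)^2) * u n n + X^((Suc j)^2) * u n n))"
    by (intro eqN_add eqN_refl eqN_sum est_up est_down assms) auto
  also have "u n n + (\<Sum>j<n. X^((Suc j)^2) * u n n + X^((Suc j)^2) * u n n) = u n n * phin n"
    by (simp add: phin_def distrib_left sum_distrib_left mult_ac)
  finally show ?thesis .
qed

definition theta :: "rat fps" where
  "theta = Abs_fps (\<lambda>m. if m = 0 then 1 else if (\<exists>d. m = d^2) then 2 else 0)"

lemma sum_sq_delta:
  assumes "m \<le> n"
  shows "(\<Sum>j<n. (if m = (Suc j)^2 then (1::rat) else 0)) = (if m \<noteq> 0 \<and> (\<exists>d. m = d^2) then 1 else 0)"
proof (cases "\<exists>j<n. m = (Suc j)^2")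
  case True
  then obtain j0 where j0: "j0 < n" "m = (Suc j0)^2" by blast
  have "(\<Sum>j<n. (if m = (Suc j)^2 then (1::rat) else 0)) = (\<Sum>j<n. (if j = j0 then 1 else 0))"
    by (intro sum.cong refl) (use j0 in \<open>auto simp: power2_eq_iff_nonneg\<close>)
  also have "\<dots> = 1" using j0 by simp
  finally show ?thesis using j0 by auto
next
  case False
  have "\<not> (m \<noteq> 0 \<and> (\<exists>d. m = d^2))"
  proof
    assume "m \<noteq> 0 \<and> (\<exists>d. m = d^2)"
    then obtain d where d: "m = d^2" "d \<noteq> 0" by auto
    then obtain j where j: "d = Suc j" using not0_implies_Suc by blast
    have "d \<le> m" using d by (simp add: power2_eq_square)
    then have "j < n" using j assms by simp
    then show False using False d j by blast
  qed
  then show ?thesis using False by (auto intro: sum.neutral)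
qed


lemma phin_eqN: "N \<le> n \<Longrightarrow> eqN N (phin n) theta"
  unfolding eqN_def
proof (intro allI impI)
  fix m assume a: "N \<le> n" "m \<le> N"
  have "fps_nth (phin n) m = (if m = 0 then 1 else 0) + 2 * (\<Sum>j<n. (if m = (Suc j)^2 then (1::rat) else 0))"
    by (simp only: phin_def fps_add_nth fps_sum_nth fps_X_power_nth fps_one_nth sum.distrib mult_2)
  also have "\<dots> = (if m = 0 then 1 else 0) + 2 * (if m \<noteq> 0 \<and> (\<exists>d. m = d^2) then 1 else 0)"
    using sum_sq_delta[of m n] a by simp
  also have "\<dots> = fps_nth theta m" by (simp add: theta_def)
  finally show "fps_nth (phin n) m = fps_nth theta m" .
qed


lemma Pe_Suc: "Pe i (Suc M) = Pe i M * (1 - X^(i * Suc M))"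
  by (simp add: Pe_def)

lemma Dodd_Suc: "Dodd (Suc n) = Dodd n * (1 + X^(2*n+1))"
  by (simp add: Dodd_def)

lemma rearr1: "(D * (1+a)) * (P * (1-a) * y) * (Q * z) = (D * P * Q) * ((1+a)*(1-a)) * y * z"
  for D P Q a y z :: "'a::comm_ring_1" by (simp add: mult_ac)
lemma rearr2: "(P2 * P1) * b * y * z = (P2 * b * z) * (P1 * y)"
  for P1 P2 b y z :: "'a::comm_ring_1" by (simp add: mult_ac)

lemma finite_id: "Dodd n * Pe 1 (2*n) * Pe 4 n = Pe 2 (2*n) * Pe 2 n"
proof (induction n)
  case 0 then show ?case by (simp add: Dodd_def Pe_def)
next
  case (Suc n)
  define a where "a = X^(2*n+1)"
  have e1: "Pe 1 (2 * Suc n) = Pe 1 (2*n) * (1 - a) * (1 - X^(2*n+2))"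
    by (simp add: Pe_Suc a_def)
  have e2: "Pe 2 (2 * Suc n) = Pe 2 (2*n) * (1 - a^2) * (1 - X^(4*n+4))"
  proof -
    have "a^2 = X^((2*n+1)*2)" by (simp only: a_def power_mult)
    also have "(2*n+1)*2 = 2 * Suc (2*n)" by simp
    finally have sq: "a^2 = X^(2 * Suc (2*n))" .
    have "2 * Suc n = Suc (Suc (2*n))" by simp
    then have "Pe 2 (2 * Suc n) = Pe 2 (2*n) * (1 - X^(2*Suc (2*n))) * (1 - X^(2*Suc (Suc (2*n))))"
      by (simp only: Pe_Suc)
    also have "2*Suc (Suc (2*n)) = 4*n+4" by simp
    finally show ?thesis by (simp only: sq)
  qed
  have e3: "Pe 4 (Suc n) = Pe 4 n * (1 - X^(4*n+4))" by (simp add: Pe_Suc)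
  have e4: "Pe 2 (Suc n) = Pe 2 n * (1 - X^(2*n+2))" by (simp add: Pe_Suc)
  have "Dodd (Suc n) * Pe 1 (2 * Suc n) * Pe 4 (Suc n)
      = (Dodd n * Pe 1 (2*n) * Pe 4 n) * ((1 + a) * (1 - a)) * (1 - X^(2*n+2)) * (1 - X^(4*n+4))"
    unfolding Dodd_Suc e1 e3 a_def[symmetric] by (rule rearr1)
  also have "(1 + a) * (1 - a) = 1 - a^2" by (simp add: algebra_simps power2_eq_square)
  also have "Dodd n * Pe 1 (2*n) * Pe 4 n = Pe 2 (2*n) * Pe 2 n" by (rule Suc)
  also have "Pe 2 (2*n) * Pe 2 n * (1 - a^2) * (1 - X^(2*n+2)) * (1 - X^(4*n+4))
     = (Pe 2 (2*n) * (1 - a^2) * (1 - X^(4*n+4))) * (Pe 2 n * (1 - X^(2*n+2)))" by (rule rearr2)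
  finally show ?case by (simp only: e2 e4)
qed


lemma T1: "theta * f_eta 1 ^ 2 * f_eta 4 ^ 2 = f_eta 2 ^ 5"
proof (rule eqN_eq)
  fix N :: nat
  define n :: nat where "n = 2*N+1"
  define F where "F = Pe 1 (2*n) ^ 2 * Pe 4 n ^ 2"
  have nN: "N \<le> n" "2*N \<le> n" "N < 2*n+2" "N \<le> 2*n" by (simp_all add: n_def)
  have "eqN N (theta * f_eta 1 ^ 2 * f_eta 4 ^ 2) (phin n * F)"
    unfolding F_def mult.assoc
    by (intro eqN_mult eqN_power eqN_sym[OF phin_eqN] f_eta_eqN nN) simp_all
  also have "phin n * F = phin n * 1 * F" by simp
  also have "eqN N \<dots> (phin n * (Pe 2 n * u n n) * F)"
    by (intro eqN_mult eqN_refl eqN_sym[OF c0_eqN] nN)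
  also have "phin n * (Pe 2 n * u n n) * F = (u n n * phin n) * (Pe 2 n * F)" by (simp add: mult_ac)
  also have "eqN N \<dots> (Dodd n ^ 2 * (Pe 2 n * F))"
    by (intro eqN_mult eqN_refl eqN_sym[OF Dodd_eqN] nN)
  also have "Dodd n ^ 2 * (Pe 2 n * F) = Pe 2 n * (Dodd n * Pe 1 (2*n) * Pe 4 n) ^ 2"
    by (simp add: F_def power_mult_distrib mult_ac)
  also have "\<dots> = Pe 2 n * (Pe 2 (2*n) * Pe 2 n) ^ 2" by (simp only: finite_id)
  also have "eqN N \<dots> (f_eta 2 * (f_eta 2 * f_eta 2) ^ 2)"
    by (intro eqN_mult eqN_power eqN_sym[OF f_eta_eqN] nN) simp_all
  also have "f_eta 2 * (f_eta 2 * f_eta 2) ^ 2 = f_eta 2 ^ 5"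
    by (simp add: power_mult_distrib numeral_eq_Suc mult_ac)
  finally show "eqN N (theta * f_eta 1 ^ 2 * f_eta 4 ^ 2) (f_eta 2 ^ 5)" .
qed


lemma fps_compose_Xk_nth:
  assumes "k \<ge> 1"
  shows "fps_nth (F oo X^k) n = (if k dvd n then fps_nth F (n div k) else 0)"
proof -
  have "fps_nth (F oo X^k) n = (\<Sum>i=0..n. fps_nth F i * (if n = k*i then 1 else 0))"
    by (simp add: fps_compose_nth power_mult[symmetric])
  also have "\<dots> = (\<Sum>i\<in>{0..n}. if i = n div k \<and> k dvd n then fps_nth F i else 0)"
  proof (intro sum.cong refl)
    fix i assume "i \<in> {0..n}"
    show "fps_nth F i * (if n = k*i then 1 else 0) = (if i = n div k \<and> k dvd n then fps_nth F i else 0)"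
      using assms by auto
  qed
  also have "\<dots> = (if k dvd n then fps_nth F (n div k) else 0)"
  proof (cases "k dvd n")
    case True
    have "n div k \<le> n" by simp
    then show ?thesis using True by (simp add: sum.delta')
  qed simp
  finally show ?thesis .
qed

lemma eqN_compose: "k \<ge> 1 \<Longrightarrow> eqN N F G \<Longrightarrow> eqN N (F oo X^k) (G oo X^k)"
  unfolding eqN_def
proof (intro allI impI)
  fix n assume a: "k \<ge> 1" "\<forall>n\<le>N. fps_nth F n = fps_nth G n" "n \<le> N"
  have "n div k \<le> N" using a(3) by (meson div_le_dividend le_trans)
  then show "fps_nth (F oo X^k) n = fps_nth (G oo X^k) n"
    using a by (simp add: fps_compose_Xk_nth)
qed

lemma Xk0: "k \<ge> 1 \<Longrightarrow> fps_nth (X^k) 0 = 0" by simp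

lemma Pe_compose: "k \<ge> 1 \<Longrightarrow> Pe i M oo X^k = Pe (k*i) M"
  unfolding Pe_def
  apply (simp add: fps_compose_prod_distrib fps_compose_sub_distrib fps_compose_power[symmetric]
      fps_X_fps_compose_startby0 power_mult[symmetric])
  apply (intro prod.cong refl)
  apply (simp add: algebra_simps)
  done

lemma f_eta_compose:
  assumes "k \<ge> 1" "i \<ge> 1"
  shows "f_eta i oo X^k = f_eta (k*i)"
proof (rule eqN_eq)
  fix N
  have "eqN N (f_eta i oo X^k) (Pe i N oo X^k)" by (intro eqN_compose f_eta_eqN assms) simp
  also have "Pe i N oo X^k = Pe (k*i) N" using assms(1) by (rule Pe_compose)
  also have "eqN N (Pe (k*i) N) (f_eta (k*i))" using assms by (intro eqN_sym[OF f_eta_eqN]) simp_all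
  finally show "eqN N (f_eta i oo X^k) (f_eta (k*i))" .
qed

lemma even_extract:
  "fps_nth (A * (W oo X^2)) (2*n) = fps_nth (Abs_fps (\<lambda>m. fps_nth A (2*m)) * W) n"
proof -
  define E where "E = Abs_fps (\<lambda>m. fps_nth A (2*m))"
  define Od where "Od = Abs_fps (\<lambda>m. fps_nth A (2*m+1))"
  have A: "A = (E oo X^2) + X * (Od oo X^2)"
  proof (rule fps_ext)
    fix j
    show "fps_nth A j = fps_nth ((E oo X^2) + X * (Od oo X^2)) j"
    proof (cases "even j")
      case True
      then show ?thesis
        by (cases j) (auto simp: fps_compose_Xk_nth E_def Od_def fps_X_mult_nth)
    next
      case False
      then obtain m where "j = Suc (2*m)" by (metis oddE Suc_eq_plus1)
      then show ?thesis
        by (simp add: fps_compose_Xk_nth E_def Od_def)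
    qed
  qed
  have "A * (W oo X^2) = ((E * W) oo X^2) + X * ((Od * W) oo X^2)"
    by (subst A) (simp add: fps_compose_mult_distrib algebra_simps)
  then have "fps_nth (A * (W oo X^2)) (2*n) = fps_nth (E * W) n + fps_nth (X * ((Od * W) oo X^2)) (2*n)"
    by (simp add: fps_compose_Xk_nth)
  also have "fps_nth (X * ((Od * W) oo X^2)) (2*n) = 0"
    by (cases n) (simp_all add: fps_compose_Xk_nth)
  finally show ?thesis by (simp add: E_def)
qed


abbreviation Iv :: "nat \<Rightarrow> rat fps" where "Iv i \<equiv> inverse (f_eta i)"

lemma fI: "f_eta i * Iv i = 1"
  by (simp add: inverse_mult_eq_1' f_eta_0)

lemma GF_alt: "GF = f_eta 2 * f_eta 4 ^ 2 * (Iv 1 ^ 2 * Iv 8)"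
  unfolding GF_def
  by (subst fps_divide_unit) (simp_all add: f_eta_0 fps_inverse_mult fps_inverse_power)

lemma theta_alt: "theta = f_eta 2 ^ 5 * Iv 1 ^ 2 * Iv 4 ^ 2"
proof -
  have "theta * (f_eta 1 * Iv 1)^2 * (f_eta 4 * Iv 4)^2 = theta" by (simp only: fI power_one mult_1_right)
  then have "theta = theta * (f_eta 1 * Iv 1)^2 * (f_eta 4 * Iv 4)^2" by (rule sym)
  also have "\<dots> = (theta * f_eta 1 ^ 2 * f_eta 4 ^ 2) * Iv 1 ^ 2 * Iv 4 ^ 2"
    by (simp add: power_mult_distrib mult_ac)
  finally show ?thesis by (simp only: T1)
qed

lemma comp2: "f_eta i oo X^2 = f_eta (2*i)" if "i \<ge> 1"
  using f_eta_compose[of 2 i] that by simp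

lemma Icomp2: "Iv i oo X^2 = Iv (2*i)" if "i \<ge> 1"
  using that by (simp add: fps_inverse_compose f_eta_0 comp2)

definition W :: "rat fps" where "W = f_eta 2 ^ 4 * Iv 1 ^ 4 * Iv 4"

lemma W_comp: "W oo X^2 = f_eta 4 ^ 4 * Iv 2 ^ 4 * Iv 8"
  unfolding W_def
  by (simp add: fps_compose_mult_distrib fps_compose_power[symmetric] comp2 Icomp2)

lemma theta_comp: "theta oo X^2 = f_eta 4 ^ 5 * Iv 2 ^ 2 * Iv 8 ^ 2"
  unfolding theta_alt
  by (simp add: fps_compose_mult_distrib fps_compose_power[symmetric] comp2 Icomp2)

lemma GF_split: "GF = theta * (W oo X^2)"
proof -
  have "theta * (W oo X^2) = f_eta 2 ^ 5 * Iv 1 ^ 2 * Iv 4 ^ 2 * (f_eta 4 ^ 4 * Iv 2 ^ 4 * Iv 8)"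
    by (simp add: theta_alt W_comp)
  also have "\<dots> = f_eta 2 * f_eta 4 ^ 2 * (Iv 1 ^ 2 * Iv 8) * (f_eta 2 * Iv 2)^4 * (f_eta 4 * Iv 4)^2"
    by (simp add: power_mult_distrib mult_ac numeral_eq_Suc)
  also have "\<dots> = GF" by (simp add: fI GF_alt)
  finally show ?thesis by simp
qed

lemma theta_even: "Abs_fps (\<lambda>m. fps_nth theta (2*m)) = theta oo X^2"
proof (rule fps_ext)
  fix m
  have sq: "(\<exists>d::nat. 2*m = d^2) \<longleftrightarrow> (even m \<and> (\<exists>e::nat. m div 2 = e^2))"
  proof
    assume "\<exists>d::nat. 2*m = d^2"
    then obtain d where d: "2*m = d^2" by blast
    then have "even (d^2)" by (metis dvd_triv_left)
    then have "even d" by simp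
    then obtain e where e: "d = 2*e" by blast
    then have "m = 2*e^2" using d by (simp add: power2_eq_square)
    then show "even m \<and> (\<exists>e::nat. m div 2 = e^2)" by auto
  next
    assume "even m \<and> (\<exists>e::nat. m div 2 = e^2)"
    then obtain e where "m = 2 * e^2" by auto
    then have "2*m = (2*e)^2" by (simp add: power2_eq_square)
    then show "\<exists>d::nat. 2*m = d^2" by blast
  qed
  show "fps_nth (Abs_fps (\<lambda>m. fps_nth theta (2*m))) m = fps_nth (theta oo X^2) m"
    using sq by (auto simp: fps_compose_Xk_nth theta_def)
qed

lemma partB: "Abs_fps (\<lambda>n. Pcoef (2 * n)) = (Abs_fps Pcoef) ^ 2"
proof -
  have "Abs_fps Pcoef = GF" by (simp add: Pcoef_def fps_ext)
  have "Abs_fps (\<lambda>n. Pcoef (2 * n)) = Abs_fps (\<lambda>n. fps_nth (theta * (W oo X^2)) (2*n))"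
    by (simp add: Pcoef_def GF_split)
  also have "\<dots> = (theta oo X^2) * W"
    by (rule fps_ext) (simp add: even_extract theta_even)
  also have "\<dots> = f_eta 4 ^ 5 * Iv 2 ^ 2 * Iv 8 ^ 2 * (f_eta 2 ^ 4 * Iv 1 ^ 4 * Iv 4)"
    by (simp add: theta_comp W_def)
  also have "\<dots> = (f_eta 2 * f_eta 4 ^ 2 * (Iv 1 ^ 2 * Iv 8))^2 * (f_eta 2 * Iv 2)^2 * (f_eta 4 * Iv 4)"
    by (simp add: power_mult_distrib mult_ac numeral_eq_Suc)
  also have "\<dots> = GF ^ 2" by (simp add: fI GF_alt)
  also have "GF = Abs_fps Pcoef" by (simp add: Pcoef_def fps_ext)
  finally show ?thesis .
qed


definition cnt :: "'b set \<Rightarrow> ('b \<Rightarrow> nat) \<Rightarrow> nat \<Rightarrow> nat" where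
  "cnt A w n = card {x\<in>A. w x = n}"

definition gfc :: "'b set \<Rightarrow> ('b \<Rightarrow> nat) \<Rightarrow> rat fps" where
  "gfc A w = Abs_fps (\<lambda>n. of_nat (cnt A w n))"

definition finfib :: "'b set \<Rightarrow> ('b \<Rightarrow> nat) \<Rightarrow> bool" where
  "finfib A w \<longleftrightarrow> (\<forall>n. finite {x\<in>A. w x = n})"

lemma fiber_prod:
  "{p\<in>A \<times> B. (case p of (x, y) \<Rightarrow> wA x + wB y) = n}
   = (\<Union>i\<in>{0..n}. {x\<in>A. wA x = i} \<times> {y\<in>B. wB y = n - i})"
  for wA :: "'a \<Rightarrow> nat" and wB :: "'b \<Rightarrow> nat"
  by auto

lemma finfib_prod:
  assumes "finfib A wA" "finfib B wB"
  shows "finfib (A \<times> B) (\<lambda>(x, y). wA x + wB y)"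
  unfolding finfib_def
proof
  fix n
  show "finite {p\<in>A \<times> B. (case p of (x, y) \<Rightarrow> wA x + wB y) = n}"
    unfolding fiber_prod using assms by (auto simp: finfib_def)
qed

lemma gfc_prod:
  assumes "finfib A wA" "finfib B wB"
  shows "gfc (A \<times> B) (\<lambda>(x, y). wA x + wB y) = gfc A wA * gfc B wB"
proof (rule fps_ext)
  fix n
  have "cnt (A \<times> B) (\<lambda>(x, y). wA x + wB y) n = card (\<Union>i\<in>{0..n}. {x\<in>A. wA x = i} \<times> {y\<in>B. wB y = n - i})"
    unfolding cnt_def by (simp only: fiber_prod)
  also have "\<dots> = (\<Sum>i\<in>{0..n}. card ({x\<in>A. wA x = i} \<times> {y\<in>B. wB y = n - i}))"
    by (rule card_UN_disjoint) (use assms in \<open>auto simp: finfib_def\<close>)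
  also have "\<dots> = (\<Sum>i\<in>{0..n}. cnt A wA i * cnt B wB (n - i))"
    by (simp add: cnt_def card_cartesian_product)
  finally show "fps_nth (gfc (A \<times> B) (\<lambda>(x, y). wA x + wB y)) n = fps_nth (gfc A wA * gfc B wB) n"
    by (simp add: gfc_def fps_mult_nth)
qed

lemma length_le_sum_list: "\<forall>x\<in>set xs. 0 < x \<Longrightarrow> length xs \<le> sum_list (xs::nat list)"
  by (induction xs) auto

lemma finfib_P3: "finfib P3 weight"
  unfolding finfib_def
proof
  fix n
  have "{x\<in>P3. weight x = n} \<subseteq> {xs. set xs \<subseteq> {0..n} \<and> length xs \<le> n}"
    by (auto simp: P3_def is_partition_def weight_def intro: member_le_sum_list
        dest: length_le_sum_list)
  moreover have "finite {xs. set xs \<subseteq> {0..n::nat} \<and> length xs \<le> n}"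
    by (rule finite_lists_length_le) simp
  ultimately show "finite {x\<in>P3. weight x = n}" by (rule finite_subset)
qed

lemma finfib_P3o: "finfib P3o weight"
  using finfib_P3 unfolding finfib_def P3o_def
  by (metis (no_types, lifting) mem_Collect_eq rev_finite_subset subsetI)


definition Q :: "(nat \<Rightarrow> bool) \<Rightarrow> nat \<Rightarrow> nat list set" where
  "Q A M = {xs. xs \<in> P3 \<and> (\<forall>x\<in>set xs. A x \<and> x \<le> M)}"

lemma count_list_replicate: "count_list (replicate t m) k = (if k = m then t else 0)"
  by (induction t) auto

lemma split_top:
  fixes xs :: "nat list"
  assumes "sorted_wrt (\<ge>) xs" "\<forall>x\<in>set xs. x \<le> m"
  shows "xs = replicate (count_list xs m) m @ filter (\<lambda>x. x \<noteq> m) xs"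
  using assms
proof (induction xs)
  case Nil then show ?case by simp
next
  case (Cons x xs)
  show ?case
  proof (cases "x = m")
    case True
    then show ?thesis using Cons by simp
  next
    case False
    then have "x < m" using Cons.prems(2) by auto
    then have "\<forall>y\<in>set xs. y < m" using Cons.prems by auto
    then have "count_list xs m = 0" "filter (\<lambda>x. x \<noteq> m) xs = xs"
      by (auto simp: count_list_0_iff filter_id_conv)
    then show ?thesis using False by simp
  qed
qed

lemma count_filter_le: "count_list (filter P xs) k \<le> count_list xs k"
  by (induction xs) auto

lemma filter_in_Q:
  assumes "xs \<in> Q A (Suc M)"
  shows "filter (\<lambda>x. x \<noteq> Suc M) xs \<in> Q A M"
proof -
  let ?ys = "filter (\<lambda>x. x \<noteq> Suc M) xs"
  have p: "sorted_wrt (\<ge>) xs" "\<forall>x\<in>set xs. 0 < x" "\<forall>k. count_list xs k \<le> 3" "\<forall>x\<in>set xs. A x \<and> x \<le> Suc M"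
    using assms by (auto simp: Q_def P3_def is_partition_def)
  have "sorted_wrt (\<ge>) ?ys" using p(1) by (rule sorted_wrt_filter)
  moreover have "\<forall>k. count_list ?ys k \<le> 3"
  proof
    fix k show "count_list ?ys k \<le> 3" by (rule le_trans[OF count_filter_le p(3)[rule_format]])
  qed
  moreover have "\<forall>x\<in>set ?ys. 0 < x \<and> A x \<and> x \<le> M" using p(2,4) by auto
  ultimately show ?thesis by (simp add: Q_def P3_def is_partition_def)
qed


lemma rep_in_Q:
  assumes "ys \<in> Q A M" "t \<le> 3" "A (Suc M)"
  shows "replicate t (Suc M) @ ys \<in> Q A (Suc M)"
proof -
  have ys: "sorted_wrt (\<ge>) ys" "\<forall>x\<in>set ys. 0 < x" "\<forall>k. count_list ys k \<le> 3" "\<forall>x\<in>set ys. A x \<and> x \<le> M"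
    using assms(1) by (auto simp: Q_def P3_def is_partition_def)
  have "sorted_wrt (\<ge>) (replicate t (Suc M) @ ys)"
    using ys by (auto simp: sorted_wrt_append intro: linorder.sorted_replicate[OF dual_linorder])
  moreover have "count_list (replicate t (Suc M) @ ys) k \<le> 3" for k
  proof (cases "k = Suc M")
    case True
    then have "count_list ys k = 0" using ys(4) by (auto simp: count_list_0_iff)
    then show ?thesis using True assms(2) by (simp add: count_list_append count_list_replicate)
  next
    case False then show ?thesis using ys(3) by (simp add: count_list_append count_list_replicate)
  qed
  ultimately show ?thesis using ys assms(3) by (auto simp: Q_def P3_def is_partition_def)
qed

lemma Q_fiber:
  assumes "A (Suc M)"
  shows "{xs\<in>Q A (Suc M). weight xs = n}
       = (\<Union>t\<in>{..<4}. (\<lambda>ys. replicate t (Suc M) @ ys) ` {ys\<in>Q A M. weight ys + t * Suc M = n})"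
    (is "?L = ?R")
proof
  show "?L \<subseteq> ?R"
  proof
    fix xs assume xs: "xs \<in> ?L"
    let ?t = "count_list xs (Suc M)"
    let ?ys = "filter (\<lambda>x. x \<noteq> Suc M) xs"
    have p: "sorted_wrt (\<ge>) xs" "\<forall>x\<in>set xs. 0 < x" "\<forall>k. count_list xs k \<le> 3" "\<forall>x\<in>set xs. A x \<and> x \<le> Suc M"
      using xs by (auto simp: Q_def P3_def is_partition_def)
    have eq: "xs = replicate ?t (Suc M) @ ?ys" by (rule split_top) (use p in auto)
    have "?ys \<in> Q A M" using xs filter_in_Q by blast
    moreover have "weight ?ys + ?t * Suc M = n"
    proof -
      have "weight xs = n" using xs by simp
      then have "weight (replicate ?t (Suc M) @ ?ys) = n" using eq by simp
      then show ?thesis by (simp add: weight_def sum_list_replicate)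
    qed
    moreover have "?t < 4" using p(3)[rule_format, of "Suc M"] by simp
    ultimately show "xs \<in> ?R" using eq by blast
  qed
next
  show "?R \<subseteq> ?L"
  proof
    fix xs assume "xs \<in> ?R"
    then obtain t ys where t: "t < 4" "ys \<in> Q A M" "weight ys + t * Suc M = n" "xs = replicate t (Suc M) @ ys"
      by blast
    then have "xs \<in> Q A (Suc M)" using rep_in_Q[of ys A M t] assms by simp
    moreover have "weight xs = n" using t by (simp add: weight_def sum_list_replicate)
    ultimately show "xs \<in> ?L" by simp
  qed
qed

lemma Q_fiber_no:
  assumes "\<not> A (Suc M)"
  shows "Q A (Suc M) = Q A M"
  using assms by (auto simp: Q_def le_Suc_eq)


definition gq :: "nat \<Rightarrow> rat fps" where "gq m = (\<Sum>t<4. X^(t*m))"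
definition hq :: "(nat \<Rightarrow> bool) \<Rightarrow> nat \<Rightarrow> rat fps" where "hq A m = (if A m then gq m else 1)"

lemma Q_0: "Q A 0 = {[]}"
  by (auto simp: Q_def P3_def is_partition_def) (metis list.set_intros(1) neq_Nil_conv not_less_zero)

lemma finfib_Q: "finite {ys\<in>Q A M. weight ys + c = n}"
proof -
  have "{ys\<in>Q A M. weight ys + c = n} \<subseteq> {ys\<in>P3. weight ys = n - c}" by (auto simp: Q_def)
  moreover have "finite {ys\<in>P3. weight ys = n - c}" using finfib_P3 by (simp add: finfib_def)
  ultimately show ?thesis by (rule finite_subset)
qed

lemma card_shift: "card {ys\<in>Q A M. weight ys + c = n} = (if c \<le> n then cnt (Q A M) weight (n - c) else 0)"
proof (cases "c \<le> n")
  case True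
  then have "{ys\<in>Q A M. weight ys + c = n} = {ys\<in>Q A M. weight ys = n - c}" by auto
  then show ?thesis using True by (simp add: cnt_def)
next
  case False
  then have "{ys\<in>Q A M. weight ys + c = n} = {}" by auto
  then show ?thesis using False by simp
qed

lemma cnt_Q_Suc:
  assumes "A (Suc M)"
  shows "cnt (Q A (Suc M)) weight n = (\<Sum>t<4. card {ys\<in>Q A M. weight ys + t * Suc M = n})"
proof -
  have "cnt (Q A (Suc M)) weight n
      = card (\<Union>t\<in>{..<4}. (\<lambda>ys. replicate t (Suc M) @ ys) ` {ys\<in>Q A M. weight ys + t * Suc M = n})"
    unfolding cnt_def Q_fiber[where A=A and M=M, OF assms] ..
  also have "\<dots> = (\<Sum>t<4. card ((\<lambda>ys. replicate t (Suc M) @ ys) ` {ys\<in>Q A M. weight ys + t * Suc M = n}))"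
  proof (rule card_UN_disjoint)
    show "finite {..<4::nat}" by simp
    show "\<forall>t\<in>{..<4}. finite ((\<lambda>ys. replicate t (Suc M) @ ys) ` {ys\<in>Q A M. weight ys + t * Suc M = n})"
      using finfib_Q by blast
    show "\<forall>t\<in>{..<4}. \<forall>t'\<in>{..<4}. t \<noteq> t' \<longrightarrow>
      (\<lambda>ys. replicate t (Suc M) @ ys) ` {ys\<in>Q A M. weight ys + t * Suc M = n} \<inter>
      (\<lambda>ys. replicate t' (Suc M) @ ys) ` {ys\<in>Q A M. weight ys + t' * Suc M = n} = {}"
    proof (intro ballI impI)
      fix t t' :: nat assume "t \<noteq> t'"
      show "(\<lambda>ys. replicate t (Suc M) @ ys) ` {ys\<in>Q A M. weight ys + t * Suc M = n} \<inter>
        (\<lambda>ys. replicate t' (Suc M) @ ys) ` {ys\<in>Q A M. weight ys + t' * Suc M = n} = {}"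
      proof (rule ccontr)
        assume "\<not> ?thesis"
        then obtain ys ys' where y: "ys \<in> Q A M" "ys' \<in> Q A M"
          "replicate t (Suc M) @ ys = replicate t' (Suc M) @ ys'" by blast
        have c0: "count_list ys (Suc M) = 0" "count_list ys' (Suc M) = 0"
          using y(1,2) by (auto simp: Q_def count_list_0_iff)
        have "count_list (replicate t (Suc M) @ ys) (Suc M) = count_list (replicate t' (Suc M) @ ys') (Suc M)"
          using y(3) by simp
        then have "t = t'" using c0 by (simp add: count_list_append count_list_replicate)
        then show False using \<open>t \<noteq> t'\<close> by simp
      qed
    qed
  qed
  also have "\<dots> = (\<Sum>t<4. card {ys\<in>Q A M. weight ys + t * Suc M = n})"
    by (intro sum.cong refl card_image) (simp add: inj_on_def)
  finally show ?thesis .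
qed

lemma gfc_Q: "gfc (Q A M) weight = (\<Prod>k<M. hq A (Suc k))"
proof (induction M)
  case 0
  show ?case
  proof (rule fps_ext)
    fix n
    have "{x\<in>{[]}. weight x = n} = (if n = 0 then {[]} else {})" by (auto simp: weight_def)
    then show "fps_nth (gfc (Q A 0) weight) n = fps_nth (\<Prod>k<0. hq A (Suc k)) n"
      by (simp add: gfc_def cnt_def Q_0)
  qed
next
  case (Suc M)
  show ?case
  proof (cases "A (Suc M)")
    case False
    then show ?thesis using Suc by (simp add: Q_fiber_no hq_def)
  next
    case True
    show ?thesis
    proof (rule fps_ext)
      fix n
      have "fps_nth (gfc (Q A (Suc M)) weight) n = (\<Sum>t<4. of_nat (card {ys\<in>Q A M. weight ys + t * Suc M = n}))"
        by (simp add: gfc_def cnt_Q_Suc[where A=A and M=M, OF True])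
      also have "\<dots> = (\<Sum>t<4. fps_nth (X^(t * Suc M) * gfc (Q A M) weight) n)"
        by (intro sum.cong refl) (simp add: card_shift fps_X_power_mult_nth gfc_def)
      also have "\<dots> = fps_nth (gfc (Q A M) weight * gq (Suc M)) n"
        by (simp add: gq_def sum_distrib_left fps_sum_nth mult.commute)
      also have "\<dots> = fps_nth (\<Prod>k<Suc M. hq A (Suc k)) n"
        using Suc True by (simp add: hq_def)
      finally show "fps_nth (gfc (Q A (Suc M)) weight) n = fps_nth (\<Prod>k<Suc M. hq A (Suc k)) n" .
    qed
  qed
qed


lemma gq_mul: "gq m * (1 - X^m) = 1 - X^(4*m)"
proof -
  have "gq m = 1 + X^m + (X^m)^2 + (X^m)^3"
    by (simp add: gq_def numeral_eq_Suc power_mult[symmetric] mult.commute power_add)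
  moreover have "X^(4*m) = (X^m)^4" by (simp add: power_mult[symmetric] mult.commute)
  ultimately show ?thesis by (simp add: algebra_simps numeral_eq_Suc)
qed

lemma parts_le_weight: "x \<in> set xs \<Longrightarrow> x \<le> weight xs"
  by (simp add: weight_def member_le_sum_list)

lemma P3_eqN_Q: "N \<le> M \<Longrightarrow> eqN N (gfc P3 weight) (gfc (Q (\<lambda>_. True) M) weight)"
  unfolding eqN_def
proof (intro allI impI)
  fix n assume a: "N \<le> M" "n \<le> N"
  have "{x\<in>P3. weight x = n} = {x\<in>Q (\<lambda>_. True) M. weight x = n}"
    using a by (auto simp: Q_def dest: parts_le_weight)
  then show "fps_nth (gfc P3 weight) n = fps_nth (gfc (Q (\<lambda>_. True) M) weight) n"
    by (simp add: gfc_def cnt_def)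
qed

lemma P3o_eqN_Q: "N \<le> M \<Longrightarrow> eqN N (gfc P3o weight) (gfc (Q odd M) weight)"
  unfolding eqN_def
proof (intro allI impI)
  fix n assume a: "N \<le> M" "n \<le> N"
  have "{x\<in>P3o. weight x = n} = {x\<in>Q odd M. weight x = n}"
    using a by (auto simp: Q_def P3o_def dest: parts_le_weight)
  then show "fps_nth (gfc P3o weight) n = fps_nth (gfc (Q odd M) weight) n"
    by (simp add: gfc_def cnt_def)
qed

lemma gP3: "gfc P3 weight * f_eta 1 = f_eta 4"
proof (rule eqN_eq)
  fix N
  have "eqN N (gfc P3 weight * f_eta 1) ((\<Prod>k<N. gq (Suc k)) * Pe 1 N)"
    using P3_eqN_Q[of N N] by (intro eqN_mult f_eta_eqN) (simp_all add: gfc_Q hq_def)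
  also have "(\<Prod>k<N. gq (Suc k)) * Pe 1 N = (\<Prod>k<N. gq (Suc k) * (1 - X^(Suc k)))"
    by (simp only: Pe_def mult_1 prod.distrib)
  also have "\<dots> = Pe 4 N" by (simp only: gq_mul Pe_def)
  also have "eqN N (Pe 4 N) (f_eta 4)" by (intro eqN_sym[OF f_eta_eqN]) simp_all
  finally show "eqN N (gfc P3 weight * f_eta 1) (f_eta 4)" .
qed

lemma rearr3: "(P * a * b) * (Q1 * c * d) * (R * e) = (P * Q1 * R) * (a * c) * (b * d) * e"
  for P Q1 R a b c d e :: "'a::comm_ring_1" by (simp add: mult_ac)
lemma rearr4: "(P2 * P4) * u * v * w = (P2 * v) * (P4 * u * w)"
  for P2 P4 u v w :: "'a::comm_ring_1" by (simp add: mult_ac)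

lemma finite_id2: "(\<Prod>k<2*M. hq odd (Suc k)) * Pe 1 (2*M) * Pe 8 M = Pe 2 M * Pe 4 (2*M)"
proof (induction M)
  case 0 then show ?case by (simp add: Pe_def)
next
  case (Suc M)
  have s: "2 * Suc M = Suc (Suc (2*M))" by simp
  have h1: "hq odd (Suc (2*M)) = gq (2*M+1)" by (simp add: hq_def)
  have h2: "hq odd (Suc (Suc (2*M))) = 1" by (simp add: hq_def)
  have "(\<Prod>k<2*Suc M. hq odd (Suc k)) * Pe 1 (2*Suc M) * Pe 8 (Suc M)
      = ((\<Prod>k<2*M. hq odd (Suc k)) * gq (2*M+1) * 1)
        * (Pe 1 (2*M) * (1 - X^(1 * Suc (2*M))) * (1 - X^(1 * Suc (Suc (2*M)))))
        * (Pe 8 M * (1 - X^(8 * Suc M)))"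
    unfolding s by (simp only: prod.lessThan_Suc Pe_Suc h1 h2)
  also have "\<dots> = ((\<Prod>k<2*M. hq odd (Suc k)) * Pe 1 (2*M) * Pe 8 M)
        * (gq (2*M+1) * (1 - X^(1 * Suc (2*M)))) * (1 * (1 - X^(1 * Suc (Suc (2*M))))) * (1 - X^(8 * Suc M))"
    by (rule rearr3)
  also have "\<dots> = (Pe 2 M * Pe 4 (2*M)) * (1 - X^(4 * Suc (2*M))) * (1 - X^(2 * Suc M)) * (1 - X^(4 * Suc (Suc (2*M))))"
  proof -
    have "gq (2*M+1) * (1 - X^(1 * Suc (2*M))) = 1 - X^(4 * Suc (2*M))" using gq_mul[of "2*M+1"] by simp
    moreover have "1 * Suc (Suc (2*M)) = 2 * Suc M" "8 * Suc M = 4 * Suc (Suc (2*M))" by simp_all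
    ultimately show ?thesis using Suc by simp
  qed
  also have "\<dots> = (Pe 2 M * (1 - X^(2 * Suc M))) * (Pe 4 (2*M) * (1 - X^(4 * Suc (2*M))) * (1 - X^(4 * Suc (Suc (2*M)))))"
    by (rule rearr4)
  also have "\<dots> = Pe 2 (Suc M) * Pe 4 (Suc (Suc (2*M)))"
    by (simp only: Pe_Suc)
  also have "\<dots> = Pe 2 (Suc M) * Pe 4 (2 * Suc M)" by (simp only: s)
  finally show ?case .
qed

lemma gP3o: "gfc P3o weight * f_eta 1 * f_eta 8 = f_eta 2 * f_eta 4"
proof (rule eqN_eq)
  fix N
  have "eqN N (gfc P3o weight * f_eta 1 * f_eta 8) ((\<Prod>k<2*N. hq odd (Suc k)) * Pe 1 (2*N) * Pe 8 N)"
    using P3o_eqN_Q[of N "2*N"] by (intro eqN_mult f_eta_eqN) (simp_all add: gfc_Q)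
  also have "\<dots> = Pe 2 N * Pe 4 (2*N)" by (rule finite_id2)
  also have "eqN N \<dots> (f_eta 2 * f_eta 4)" by (intro eqN_mult eqN_sym[OF f_eta_eqN]) simp_all
  finally show "eqN N (gfc P3o weight * f_eta 1 * f_eta 8) (f_eta 2 * f_eta 4)" .
qed

lemma GF_comb: "GF = gfc P3o weight * gfc P3 weight"
proof -
  have a: "gfc P3 weight = f_eta 4 * Iv 1"
  proof -
    have "gfc P3 weight = gfc P3 weight * (f_eta 1 * Iv 1)" by (simp add: fI)
    also have "\<dots> = (gfc P3 weight * f_eta 1) * Iv 1" by (simp only: mult.assoc)
    finally show ?thesis by (simp only: gP3)
  qed
  have b: "gfc P3o weight = f_eta 2 * f_eta 4 * Iv 1 * Iv 8"
  proof -
    have "gfc P3o weight = gfc P3o weight * (f_eta 1 * Iv 1) * (f_eta 8 * Iv 8)" by (simp add: fI)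
    also have "\<dots> = (gfc P3o weight * f_eta 1 * f_eta 8) * Iv 1 * Iv 8" by (simp only: mult_ac)
    finally show ?thesis by (simp only: gP3o)
  qed
  show ?thesis by (simp add: a b GF_alt power2_eq_square mult_ac)
qed


lemma glue:
  fixes wD :: "'a \<Rightarrow> nat" and wC :: "'b \<Rightarrow> nat"
  assumes ev: "\<forall>x\<in>D. even (wD x)"
    and fD: "\<And>n. finite {x\<in>D. wD x = 2*n}" and fC: "\<And>n. finite {y\<in>C. wC y = n}"
    and cd: "\<And>n. card {x\<in>D. wD x = 2*n} = card {y\<in>C. wC y = n}"
  shows "\<exists>\<phi>. bij_betw \<phi> D C \<and> (\<forall>x\<in>D. 2 * wC (\<phi> x) = wD x)"
proof -
  have "\<forall>n. \<exists>h. bij_betw h {x\<in>D. wD x = 2*n} {y\<in>C. wC y = n}"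
    using finite_same_card_bij[OF fD fC cd] by blast
  then obtain h where h: "\<And>n. bij_betw (h n) {x\<in>D. wD x = 2*n} {y\<in>C. wC y = n}"
    by metis
  define \<phi> where "\<phi> x = h (wD x div 2) x" for x
  have mem: "x \<in> {x'\<in>D. wD x' = 2 * (wD x div 2)}" if "x \<in> D" for x
    using ev that by auto
  have img: "\<phi> x \<in> {y\<in>C. wC y = wD x div 2}" if "x \<in> D" for x
    unfolding \<phi>_def using bij_betwE[OF h] mem[OF that] by blast
  have "bij_betw \<phi> D C"
    unfolding bij_betw_def
  proof (intro conjI)
    show "inj_on \<phi> D"
    proof (rule inj_onI)
      fix x y assume xy: "x \<in> D" "y \<in> D" "\<phi> x = \<phi> y"
      have "wD x div 2 = wD y div 2" using img[OF xy(1)] img[OF xy(2)] xy(3) by simp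
      then have "h (wD x div 2) x = h (wD x div 2) y" using xy(3) by (simp add: \<phi>_def)
      moreover have "inj_on (h (wD x div 2)) {x'\<in>D. wD x' = 2 * (wD x div 2)}"
        using h bij_betw_def by blast
      moreover have "y \<in> {x'\<in>D. wD x' = 2 * (wD x div 2)}"
        using mem[OF xy(2)] \<open>wD x div 2 = wD y div 2\<close> by simp
      ultimately show "x = y" using mem[OF xy(1)] by (meson inj_onD)
    qed
    show "\<phi> ` D = C"
    proof
      show "\<phi> ` D \<subseteq> C" using img by blast
      show "C \<subseteq> \<phi> ` D"
      proof
        fix y assume y: "y \<in> C"
        let ?n = "wC y"
        have "y \<in> h ?n ` {x\<in>D. wD x = 2 * ?n}" using h[of ?n] y by (simp add: bij_betw_def)
        then obtain x where x: "x \<in> D" "wD x = 2 * ?n" "y = h ?n x" by blast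
        then have "\<phi> x = y" by (simp add: \<phi>_def)
        then show "y \<in> \<phi> ` D" using x by blast
      qed
    qed
  qed
  moreover have "\<forall>x\<in>D. 2 * wC (\<phi> x) = wD x"
    using img ev by fastforce
  ultimately show ?thesis by blast
qed


theorem theorem2p11:
  shows "(\<exists>\<phi> :: nat list \<times> nat list \<Rightarrow> nat list \<times> nat list \<times> nat list \<times> nat list.
            bij_betw \<phi> {(a, b). a \<in> P3o \<and> b \<in> P3 \<and> even (weight a + weight b)}
                       (P3o \<times> P3o \<times> P3 \<times> P3)
          \<and> (\<forall>a b. a \<in> P3o \<and> b \<in> P3 \<and> even (weight a + weight b) \<longrightarrow>
                (case \<phi> (a, b) of (c, d, e, g) \<Rightarrow>
                   2 * (weight c + weight d + weight e + weight g) = weight a + weight b)))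
       \<and> Abs_fps (\<lambda>n. Pcoef (2 * n)) = (Abs_fps Pcoef) ^ 2"
proof
  define w2 :: "nat list \<times> nat list \<Rightarrow> nat" where "w2 = (\<lambda>(a, b). weight a + weight b)"
  define w4 :: "nat list \<times> nat list \<times> nat list \<times> nat list \<Rightarrow> nat"
    where "w4 = (\<lambda>(c, d, e, g). weight c + weight d + weight e + weight g)"
  define D where "D = {(a, b). a \<in> P3o \<and> b \<in> P3 \<and> even (weight a + weight b)}"
  define C where "C = P3o \<times> P3o \<times> P3 \<times> P3"
  have fib2: "finfib (P3o \<times> P3) w2"
    unfolding w2_def by (intro finfib_prod finfib_P3o finfib_P3)
  have GF2: "gfc (P3o \<times> P3) w2 = GF"
    unfolding w2_def by (simp add: gfc_prod finfib_P3o finfib_P3 GF_comb)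
  have fibPP: "finfib (P3 \<times> P3) (\<lambda>(x, y). weight x + weight y)"
    by (intro finfib_prod finfib_P3o finfib_P3)
  have fibOPP: "finfib (P3o \<times> P3 \<times> P3) (\<lambda>(x, y). weight x + (\<lambda>(x, y). weight x + weight y) y)"
    by (intro finfib_prod finfib_P3o fibPP)
  have w4_eq: "w4 = (\<lambda>(x, y). weight x + (\<lambda>(x, y). weight x + (\<lambda>(x, y). weight x + weight y) y) y)"
    by (auto simp: w4_def fun_eq_iff)
  have fib4: "finfib C w4"
    unfolding C_def w4_eq by (intro finfib_prod finfib_P3o fibOPP)
  have GF4: "gfc C w4 = GF ^ 2"
    unfolding C_def w4_eq
    by (simp add: gfc_prod finfib_P3o finfib_P3 fibPP fibOPP GF_comb power2_eq_square mult_ac)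
  have PG: "Abs_fps Pcoef = GF" by (simp add: Pcoef_def fps_ext)
  have cardeq: "card {x\<in>D. w2 x = 2*n} = card {y\<in>C. w4 y = n}" for n
  proof -
    have "{x\<in>D. w2 x = 2*n} = {x\<in>P3o \<times> P3. w2 x = 2*n}" by (auto simp: D_def w2_def simp del: even_add)
    then have "(of_nat (card {x\<in>D. w2 x = 2*n}) :: rat) = fps_nth (gfc (P3o \<times> P3) w2) (2*n)"
      by (simp add: gfc_def cnt_def)
    also have "\<dots> = fps_nth (Abs_fps (\<lambda>n. Pcoef (2 * n))) n" by (simp add: GF2 Pcoef_def)
    also have "\<dots> = fps_nth (GF ^ 2) n" by (simp only: partB PG)
    also have "\<dots> = of_nat (card {y\<in>C. w4 y = n})" by (simp add: GF4[symmetric] gfc_def cnt_def)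
    finally show ?thesis by (simp only: of_nat_eq_iff)
  qed
  have fD: "finite {x\<in>D. w2 x = 2*n}" for n
  proof -
    have "{x\<in>D. w2 x = 2*n} = {x\<in>P3o \<times> P3. w2 x = 2*n}" by (auto simp: D_def w2_def simp del: even_add)
    then show ?thesis using fib2 by (simp add: finfib_def)
  qed
  have fC: "finite {y\<in>C. w4 y = n}" for n using fib4 by (simp add: finfib_def)
  have ev: "\<forall>x\<in>D. even (w2 x)" by (auto simp: D_def w2_def simp del: even_add)
  obtain \<phi> where phi: "bij_betw \<phi> D C" "\<forall>x\<in>D. 2 * w4 (\<phi> x) = w2 x"
    using glue[OF ev fD fC cardeq] by blast
  have "\<forall>a b. a \<in> P3o \<and> b \<in> P3 \<and> even (weight a + weight b) \<longrightarrow>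
                (case \<phi> (a, b) of (c, d, e, g) \<Rightarrow>
                   2 * (weight c + weight d + weight e + weight g) = weight a + weight b)"
  proof (intro allI impI)
    fix a b assume ab: "a \<in> P3o \<and> b \<in> P3 \<and> even (weight a + weight b)"
    then have "(a, b) \<in> D" by (simp add: D_def)
    then have *: "2 * w4 (\<phi> (a, b)) = weight a + weight b" using phi(2) by (simp add: w2_def)
    obtain c d e g where cd: "\<phi> (a, b) = (c, d, e, g)" by (metis prod_cases4)
    show "case \<phi> (a, b) of (c, d, e, g) \<Rightarrow>
                   2 * (weight c + weight d + weight e + weight g) = weight a + weight b"
      using * by (simp add: cd w4_def)
  qed
  then show "\<exists>\<phi> :: nat list \<times> nat list \<Rightarrow> nat list \<times> nat list \<times> nat list \<times> nat list.
            bij_betw \<phi> {(a, b). a \<in> P3o \<and> b \<in> P3 \<and> even (weight a + weight b)}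
                       (P3o \<times> P3o \<times> P3 \<times> P3)
          \<and> (\<forall>a b. a \<in> P3o \<and> b \<in> P3 \<and> even (weight a + weight b) \<longrightarrow>
                (case \<phi> (a, b) of (c, d, e, g) \<Rightarrow>
                   2 * (weight c + weight d + weight e + weight g) = weight a + weight b))"
    using phi(1) unfolding D_def C_def by blast
next
  show "Abs_fps (\<lambda>n. Pcoef (2 * n)) = (Abs_fps Pcoef) ^ 2" by (rule partB)
qed


end
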